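(* Let $\mathcal{T}$ be a tangle of order $k$ in a connectivity system $(E,\lambda)$, and let $X$ be a $\mathcal{T}$-strong $k$-separating set in $\lambda$. If $X_1$ and $X_2$ are fully closed $k$-separating sets that contain $X$, then there is a fully closed $k$-separating set $Y$ such that $X\subseteq Y\subseteq X_1\cap X_2$.
   Context: A connectivity system is a pair $(E,\lambda)$ with $E$ finite and $\lambda$ an integer-valued symmetric ($\lambda(X)=\lambda(E-X)$) submodular ($\lambda(X)+\lambda(Y)\ge\lambda(X\cup Y)+\lambda(X\cap Y)$) function on subsets of $E$. $X$ is $k$-separating if $\lambda(X)\le k$. A tangle of order $k$ is a collection $\mathcal T$ of subsets of $E$ with (T1) $\lambda(A)<k$ for $A\in\mathcal T$; (T2) if $\lambda(A)\le k-1$ then $A\in\mathcal T$ or $E-A\in\mathcal T$; (T3) $A\cup B\cup C\ne E$ for $A,B,C\in\mathcal T$; (T4) $E-\{e\}\notin\mathcal T$ for $e\in E$. A set is $\mathcal T$-weak if contained in a member of $\mathcal T$, and $\mathcal T$-strong otherwise. A $\mathcal T$-strong $k$-separating set $X$ is fully closed (with respect to $\mathcal T$) if $X\cup Y$ is not $k$-separating for every nonempty $\mathcal T$-weak set $Y\subseteq E-X$. *)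

theory Defs
  imports Main
begin

definition connectivity_system :: "'a set \<Rightarrow> ('a set \<Rightarrow> int) \<Rightarrow> bool" where
  "connectivity_system E lam \<longleftrightarrow>
     finite E \<and>
     (\<forall>X. X \<subseteq> E \<longrightarrow> lam X = lam (E - X)) \<and>
     (\<forall>X Y. X \<subseteq> E \<longrightarrow> Y \<subseteq> E \<longrightarrow> lam X + lam Y \<ge> lam (X \<union> Y) + lam (X \<inter> Y))"

definition k_separating :: "('a set \<Rightarrow> int) \<Rightarrow> int \<Rightarrow> 'a set \<Rightarrow> bool" where
  "k_separating lam k X \<longleftrightarrow> lam X \<le> k"

definition tangle :: "'a set \<Rightarrow> ('a set \<Rightarrow> int) \<Rightarrow> int \<Rightarrow> 'a set set \<Rightarrow> bool" where
  "tangle E lam k T \<longleftrightarrow>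
     T \<subseteq> Pow E \<and>
     (\<forall>A\<in>T. lam A < k) \<and>
     (\<forall>A. A \<subseteq> E \<longrightarrow> lam A \<le> k - 1 \<longrightarrow> A \<in> T \<or> E - A \<in> T) \<and>
     (\<forall>A\<in>T. \<forall>B\<in>T. \<forall>C\<in>T. A \<union> B \<union> C \<noteq> E) \<and>
     (\<forall>e\<in>E. E - {e} \<notin> T)"

definition T_weak :: "'a set set \<Rightarrow> 'a set \<Rightarrow> bool" where
  "T_weak T X \<longleftrightarrow> (\<exists>A\<in>T. X \<subseteq> A)"

definition T_strong :: "'a set set \<Rightarrow> 'a set \<Rightarrow> bool" where
  "T_strong T X \<longleftrightarrow> \<not> T_weak T X"

definition fully_closed :: "'a set \<Rightarrow> ('a set \<Rightarrow> int) \<Rightarrow> int \<Rightarrow> 'a set set \<Rightarrow> 'a set \<Rightarrow> bool" where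
  "fully_closed E lam k T X \<longleftrightarrow>
     X \<subseteq> E \<and> T_strong T X \<and> k_separating lam k X \<and>
     (\<forall>Y. Y \<noteq> {} \<longrightarrow> Y \<subseteq> E - X \<longrightarrow> T_weak T Y \<longrightarrow> \<not> k_separating lam k (X \<union> Y))"

end

theory Submission
  imports Defs
begin

lemma strong_mono: "T_strong T Y \<Longrightarrow> Y \<subseteq> W \<Longrightarrow> T_strong T W"
  unfolding T_strong_def T_weak_def by blast

lemma weak_mono: "T_weak T W \<Longrightarrow> Y \<subseteq> W \<Longrightarrow> T_weak T Y"
  unfolding T_weak_def by blast

lemma fc_no_low:
  assumes cs: "connectivity_system E lam" and tg: "tangle E lam k T"
    and fc: "fully_closed E lam k T X1" and YX: "Y \<subseteq> X1"
    and st: "T_strong T Y" and lo: "lam Y \<le> k - 1"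
  shows "X1 = E"
proof (rule ccontr)
  assume ne: "X1 \<noteq> E"
  have X1E: "X1 \<subseteq> E" using fc unfolding fully_closed_def by (elim conjE)
  have YE: "Y \<subseteq> E" using YX X1E by blast
  have T2: "\<forall>A. A \<subseteq> E \<longrightarrow> lam A \<le> k - 1 \<longrightarrow> A \<in> T \<or> E - A \<in> T"
    using tg unfolding tangle_def by (elim conjE)
  have "Y \<in> T \<or> E - Y \<in> T" using T2 YE lo by simp
  moreover have "Y \<notin> T" using st unfolding T_strong_def T_weak_def by blast
  ultimately have EY: "E - Y \<in> T" by blast
  have SY: "\<forall>X. X \<subseteq> E \<longrightarrow> lam X = lam (E - X)"
    using cs unfolding connectivity_system_def by (elim conjE)
  have SM: "\<forall>X Y. X \<subseteq> E \<longrightarrow> Y \<subseteq> E \<longrightarrow> lam X + lam Y \<ge> lam (X \<union> Y) + lam (X \<inter> Y)"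
    using cs unfolding connectivity_system_def by (elim conjE)
  have sym: "lam (E - Y) = lam Y" using SY YE by (metis)
  have symE: "lam (E - E) = lam E" using SY by (metis order_refl)
  have sub: "lam Y + lam (E - Y) \<ge> lam (Y \<union> (E - Y)) + lam (Y \<inter> (E - Y))"
    using SM[rule_format, OF YE Diff_subset] .
  have "Y \<union> (E - Y) = E" using YE by blast
  moreover have "Y \<inter> (E - Y) = {}" by blast
  ultimately have "lam E \<le> k - 1" using sub sym symE lo by simp
  note lE0 = this
  note lE = lE0
  have w1: "T_weak T (E - X1)" unfolding T_weak_def using EY YX by blast
  have n1: "E - X1 \<noteq> {}" using ne X1E by blast
  have FC: "\<forall>Y. Y \<noteq> {} \<longrightarrow> Y \<subseteq> E - X1 \<longrightarrow> T_weak T Y \<longrightarrow> \<not> k_separating lam k (X1 \<union> Y)"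
    using fc unfolding fully_closed_def by (elim conjE)
  have "\<not> k_separating lam k (X1 \<union> (E - X1))"
    using FC[rule_format, OF n1 order_refl w1] .
  moreover have "X1 \<union> (E - X1) = E" using X1E by blast
  ultimately have "\<not> lam E \<le> k" unfolding k_separating_def by simp
  thus False using lE by simp
qed

lemma stay:
  assumes cs: "connectivity_system E lam" and tg: "tangle E lam k T"
    and fc: "fully_closed E lam k T X1" and YX: "Y \<subseteq> X1"
    and st: "T_strong T Y" and wk: "T_weak T Z" and YZE: "Y \<union> Z \<subseteq> E"
    and ks: "lam (Y \<union> Z) \<le> k"
  shows "Z \<subseteq> X1"
proof (rule ccontr)
  assume nz: "\<not> Z \<subseteq> X1"
  have X1E: "X1 \<subseteq> E" using fc unfolding fully_closed_def by (elim conjE)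
  have lX1: "lam X1 \<le> k" using fc unfolding fully_closed_def k_separating_def by (elim conjE)
  let ?Z = "Z - X1"
  have z1: "?Z \<noteq> {}" using nz by blast
  have z2: "?Z \<subseteq> E - X1" using YZE by blast
  have z3: "T_weak T ?Z" using wk weak_mono Diff_subset by blast
  have FC: "\<forall>Y. Y \<noteq> {} \<longrightarrow> Y \<subseteq> E - X1 \<longrightarrow> T_weak T Y \<longrightarrow> \<not> k_separating lam k (X1 \<union> Y)"
    using fc unfolding fully_closed_def by (elim conjE)
  have big: "\<not> lam (X1 \<union> ?Z) \<le> k"
    using FC[rule_format, OF z1 z2 z3] unfolding k_separating_def .
  have SM: "\<forall>X Y. X \<subseteq> E \<longrightarrow> Y \<subseteq> E \<longrightarrow> lam X + lam Y \<ge> lam (X \<union> Y) + lam (X \<inter> Y)"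
    using cs unfolding connectivity_system_def by (elim conjE)
  have sub: "lam X1 + lam (Y \<union> Z) \<ge> lam (X1 \<union> (Y \<union> Z)) + lam (X1 \<inter> (Y \<union> Z))"
    using SM[rule_format, OF X1E YZE] .
  have eq: "X1 \<union> (Y \<union> Z) = X1 \<union> ?Z" using YX by blast
  have big2: "\<not> lam (X1 \<union> (Y \<union> Z)) \<le> k" using big unfolding eq .
  have lo: "lam (X1 \<inter> (Y \<union> Z)) \<le> k - 1" using sub big2 lX1 ks by linarith
  have "Y \<subseteq> X1 \<inter> (Y \<union> Z)" using YX by blast
  hence "T_strong T (X1 \<inter> (Y \<union> Z))" by (rule strong_mono[OF st])
  hence "X1 = E" using fc_no_low[OF cs tg fc Int_lower1 _ lo] by blast
  thus False using nz YZE by blast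
qed

theorem lemma3p1:
  fixes E :: "'a set" and lam :: "'a set \<Rightarrow> int" and k :: int
    and T :: "'a set set" and X X1 X2 :: "'a set"
  assumes "connectivity_system E lam"
    and "tangle E lam k T"
    and "X \<subseteq> E" and "T_strong T X" and "k_separating lam k X"
    and "fully_closed E lam k T X1" and "fully_closed E lam k T X2"
    and "X \<subseteq> X1" and "X \<subseteq> X2"
  shows "\<exists>Y. fully_closed E lam k T Y \<and> X \<subseteq> Y \<and> Y \<subseteq> X1 \<inter> X2"
proof -
  note cs = assms(1) and tg = assms(2)
  have X1E: "X1 \<subseteq> E" using assms(6) unfolding fully_closed_def by (elim conjE)
  define F where "F = {Y. X \<subseteq> Y \<and> Y \<subseteq> X1 \<inter> X2 \<and> T_strong T Y \<and> lam Y \<le> k}"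
  have "finite E" using cs unfolding connectivity_system_def by (elim conjE)
  moreover have "F \<subseteq> Pow E"
  proof
    fix Y assume "Y \<in> F"
    hence "Y \<subseteq> X1" unfolding F_def by simp
    thus "Y \<in> Pow E" using X1E by simp
  qed
  ultimately have "finite F" by (simp add: finite_subset)
  moreover have "X \<in> F" unfolding F_def
    using assms(4,5,8,9) unfolding k_separating_def by simp
  ultimately obtain Y where YF: "Y \<in> F" and mx: "\<forall>b\<in>F. Y \<le> b \<longrightarrow> Y = b"
    using finite_has_maximal[of F] by auto
  have YX1: "Y \<subseteq> X1" and YX2: "Y \<subseteq> X2" and st: "T_strong T Y" and ks: "lam Y \<le> k"
    and XY: "X \<subseteq> Y"
    using YF unfolding F_def by simp_all
  have "fully_closed E lam k T Y"
    unfolding fully_closed_def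
  proof (intro conjI allI impI)
    show "Y \<subseteq> E" using YX1 X1E by blast
    show "T_strong T Y" by fact
    show "k_separating lam k Y" using ks unfolding k_separating_def .
    fix Z assume zn: "Z \<noteq> {}" and zE: "Z \<subseteq> E - Y" and wk: "T_weak T Z"
    show "\<not> k_separating lam k (Y \<union> Z)"
    proof
      assume "k_separating lam k (Y \<union> Z)"
      hence kz: "lam (Y \<union> Z) \<le> k" unfolding k_separating_def .
      have yzE: "Y \<union> Z \<subseteq> E" using zE YX1 X1E by blast
      have "Z \<subseteq> X1" using stay[OF cs tg assms(6) YX1 st wk yzE kz] .
      moreover have "Z \<subseteq> X2" using stay[OF cs tg assms(7) YX2 st wk yzE kz] .
      moreover have "T_strong T (Y \<union> Z)" using strong_mono[OF st Un_upper1] .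
      ultimately have "Y \<union> Z \<in> F" unfolding F_def
        using XY YX1 YX2 kz by auto
      hence "Y = Y \<union> Z" using mx Un_upper1 by (metis)
      thus False using zn zE by blast
    qed
  qed
  thus ?thesis using XY YX1 YX2 by blast
qed

end
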